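(* Let $H \le G$ be finite groups such that the interval $[H,G]$ is a Boolean lattice. Then there exists $g \in G$ with $\langle H, g\rangle = G$.
   Context: The interval $[H,G]$ is the lattice of subgroups $K$ with $H \le K \le G$ (meet = intersection, join = generated subgroup). A finite lattice is Boolean if it is isomorphic to the lattice of all subsets of a finite set. *)

theory Defs
  imports "HOL-Algebra.Algebra"
begin

definition subgroup_interval :: "('a, 'b) monoid_scheme \<Rightarrow> 'a set \<Rightarrow> 'a set set" where
  "subgroup_interval G H = {K. subgroup K G \<and> H \<subseteq> K}"

text \<open>A finite lattice is Boolean iff it is isomorphic to the lattice of all subsets of a
  finite set. A lattice isomorphism is the same as an order isomorphism (a bijection
  preserving and reflecting the order); the finite set may be taken to be {..<n}.\<close>
definition boolean_interval :: "('a, 'b) monoid_scheme \<Rightarrow> 'a set \<Rightarrow> bool" where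
  "boolean_interval G H \<longleftrightarrow>
     (\<exists>(n::nat) (f :: 'a set \<Rightarrow> nat set).
        bij_betw f (subgroup_interval G H) (Pow {..<n}) \<and>
        (\<forall>K\<in>subgroup_interval G H. \<forall>K'\<in>subgroup_interval G H. K \<subseteq> K' \<longleftrightarrow> f K \<subseteq> f K'))"

end

theory Submission
  imports Defs
begin

lemma sub_mult_notin_l:
  fixes G (structure)
  assumes "group G" "subgroup M G" "x \<in> carrier G" "y \<in> M" "x \<notin> M"
  shows "x \<otimes>\<^bsub>G\<^esub> y \<notin> M"
proof
  assume h: "x \<otimes>\<^bsub>G\<^esub> y \<in> M"
  interpret group G by fact
  have yc: "y \<in> carrier G" using assms subgroup.subset by blast
  have "(x \<otimes> y) \<otimes> inv y \<in> M"
    using h assms(2,4) subgroup.m_closed subgroup.m_inv_closed by metis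
  moreover have "(x \<otimes> y) \<otimes> inv y = x" using yc assms(3) by (simp add: m_assoc)
  ultimately show False using assms(5) by simp
qed

lemma sub_mult_notin_r:
  fixes G (structure)
  assumes "group G" "subgroup M G" "y \<in> carrier G" "x \<in> M" "y \<notin> M"
  shows "x \<otimes>\<^bsub>G\<^esub> y \<notin> M"
proof
  assume h: "x \<otimes>\<^bsub>G\<^esub> y \<in> M"
  interpret group G by fact
  have xc: "x \<in> carrier G" using assms subgroup.subset by blast
  have "inv x \<otimes> (x \<otimes> y) \<in> M"
    using h assms(2,4) subgroup.m_closed subgroup.m_inv_closed by metis
  moreover have "inv x \<otimes> (x \<otimes> y) = y" using xc assms(3) by (simp add: m_assoc[symmetric])
  ultimately show False using assms(5) by simp
qed

theorem theorem2p4: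
  fixes G (structure) and H :: "'a set"
  assumes "group G" and "finite (carrier G)" and "subgroup H G"
    and "boolean_interval G H"
  shows "\<exists>g\<in>carrier G. generate G (H \<union> {g}) = carrier G"
proof -
  interpret group G by fact
  define I where "I = subgroup_interval G H"
  obtain n and f :: "'a set \<Rightarrow> nat set" where bij: "bij_betw f I (Pow {..<n})"
    and ord0: "\<forall>K\<in>I. \<forall>K'\<in>I. K \<subseteq> K' \<longleftrightarrow> f K \<subseteq> f K'"
    using assms(4) unfolding boolean_interval_def I_def by blast
  have ord: "K \<in> I \<Longrightarrow> K' \<in> I \<Longrightarrow> K \<subseteq> K' \<longleftrightarrow> f K \<subseteq> f K'" for K K'
    using ord0 by simp
  define g' where "g' = inv_into I f"
  have g'I: "S \<subseteq> {..<n} \<Longrightarrow> g' S \<in> I" for S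
    unfolding g'_def by (meson Pow_iff bij bij_betw_apply bij_betw_inv_into)
  have fg': "S \<subseteq> {..<n} \<Longrightarrow> f (g' S) = S" for S
    unfolding g'_def using bij by (simp add: bij_betw_inv_into_right)
  have inj: "K \<in> I \<Longrightarrow> K' \<in> I \<Longrightarrow> f K = f K' \<Longrightarrow> K = K'" for K K'
    using bij by (meson bij_betw_imp_inj_on inj_onD)
  have fI: "K \<in> I \<Longrightarrow> f K \<subseteq> {..<n}" for K
    using bij bij_betw_apply by fastforce
  have HI: "H \<in> I" using assms(3) unfolding I_def subgroup_interval_def by auto
  have GI: "carrier G \<in> I" using assms(3) subgroup_self unfolding I_def subgroup_interval_def
    by (auto dest: subgroup.subset)
  have Isub: "K \<in> I \<Longrightarrow> subgroup K G" for K unfolding I_def subgroup_interval_def by auto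
  have IH: "K \<in> I \<Longrightarrow> H \<subseteq> K" for K unfolding I_def subgroup_interval_def by auto
  have fH: "f H = {}"
  proof -
    have "f H \<subseteq> f (g' {})" using ord[OF HI g'I[of "{}"]] IH[OF g'I[of "{}"]] by auto
    thus ?thesis using fg'[of "{}"] by auto
  qed
  have fG: "f (carrier G) = {..<n}"
  proof -
    have "g' {..<n} \<subseteq> carrier G" using Isub[OF g'I[of "{..<n}"]] subgroup.subset by blast
    hence "{..<n} \<subseteq> f (carrier G)" using ord[OF g'I[of "{..<n}"] GI] fg'[of "{..<n}"] by auto
    thus ?thesis using fI[OF GI] by auto
  qed
  define A where "A j = g' {j}" for j
  define M where "M j = g' ({..<n} - {j})" for j
  have AI: "j < n \<Longrightarrow> A j \<in> I" for j unfolding A_def by (rule g'I) auto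
  have MI: "M j \<in> I" for j unfolding M_def by (rule g'I) auto
  have AM: "j < n \<Longrightarrow> k \<noteq> j \<Longrightarrow> A j \<subseteq> M k" for j k
  proof -
    assume j: "j < n" and kj: "k \<noteq> j"
    have "f (A j) \<subseteq> f (M k)" using fg'[of "{j}"] fg'[of "{..<n} - {k}"] j kj unfolding A_def M_def by auto
    thus "A j \<subseteq> M k" using ord[OF AI[OF j] MI] by blast
  qed
  have Aa: "j < n \<Longrightarrow> \<exists>a \<in> A j. a \<notin> M j" for j
  proof (rule ccontr)
    assume j: "j < n" and "\<not> (\<exists>a \<in> A j. a \<notin> M j)"
    hence "A j \<subseteq> M j" by auto
    hence "f (A j) \<subseteq> f (M j)" using ord[OF AI[OF j] MI] by auto
    thus False using fg'[of "{j}"] fg'[of "{..<n} - {j}"] j unfolding A_def M_def by auto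
  qed
  have step: "m \<le> n \<Longrightarrow> \<exists>g\<in>carrier G. (\<forall>j<m. g \<notin> M j) \<and> (\<forall>j. m \<le> j \<longrightarrow> j < n \<longrightarrow> g \<in> M j)" for m
  proof (induction m)
    case 0
    have "\<forall>j. 0 \<le> j \<longrightarrow> j < n \<longrightarrow> \<one> \<in> M j"
      using MI Isub subgroup.one_closed by blast
    thus ?case by blast
  next
    case (Suc m)
    have mn: "m < n" using Suc.prems by simp
    obtain g where g: "g \<in> carrier G" "\<forall>j<m. g \<notin> M j" "\<forall>j. m \<le> j \<longrightarrow> j < n \<longrightarrow> g \<in> M j"
      using Suc.IH mn by (meson less_imp_le)
    obtain a where a: "a \<in> A m" "a \<notin> M m" using Aa[OF mn] by blast
    have ac: "a \<in> carrier G" using a Isub[OF AI[OF mn]] subgroup.subset by blast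
    show ?case
    proof (intro bexI conjI allI impI)
      show "g \<otimes> a \<in> carrier G" using g ac by simp
      fix j assume "j < Suc m"
      show "g \<otimes> a \<notin> M j"
      proof (cases "j = m")
        case True
        have "g \<in> M m" using g(3) mn by blast
        thus ?thesis using sub_mult_notin_r[OF assms(1) Isub[OF MI] ac _ a(2)] True by blast
      next
        case False
        hence "j < m" using \<open>j < Suc m\<close> by auto
        hence "g \<notin> M j" "a \<in> M j" using g(2) AM[OF mn, of j] a(1) by auto
        thus ?thesis using sub_mult_notin_l[OF assms(1) Isub[OF MI] g(1)] by blast
      qed
    next
      fix j assume "Suc m \<le> j" "j < n"
      hence "g \<in> M j" "a \<in> M j" using g(3) AM[OF mn, of j] a(1) by auto
      thus "g \<otimes> a \<in> M j" using Isub[OF MI] subgroup.m_closed by metis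
    qed
  qed
  obtain g where g: "g \<in> carrier G" "\<forall>j<n. g \<notin> M j" using step[of n] by auto
  define K where "K = generate G (H \<union> {g})"
  have Hc: "H \<union> {g} \<subseteq> carrier G" using g(1) assms(3) subgroup.subset by blast
  have KI: "K \<in> I" unfolding K_def I_def subgroup_interval_def
    using generate_is_subgroup[OF Hc] generate.incl[of _ "H \<union> {g}" G] by auto
  have gK: "g \<in> K" unfolding K_def by (rule generate.incl) auto
  have "f K = {..<n}"
  proof (rule ccontr)
    assume "f K \<noteq> {..<n}"
    then obtain j where j: "j < n" "j \<notin> f K" using fI[OF KI] by auto
    have "f (M j) = {..<n} - {j}" using fg'[of "{..<n} - {j}"] unfolding M_def by auto
    hence "f K \<subseteq> f (M j)" using fI[OF KI] j by auto
    hence "K \<subseteq> M j" using ord[OF KI MI] by auto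
    thus False using gK g(2) j by auto
  qed
  hence "K = carrier G" using inj[OF KI GI] fG by simp
  thus ?thesis using g(1) K_def by auto
qed

end
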